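(* Let $\{f(\mathbf z;\boldsymbol\theta):\boldsymbol\theta\in\Theta\}$, $\Theta\subset\mathbb{R}^p$, be a family of probability mass or density functions on $\mathcal Z\subset\mathbb{R}^q$ of the form $f(\mathbf z;\boldsymbol\theta)=\int_\Omega\varphi(\mathbf v,\mathbf z,\boldsymbol\theta)\,\omega(\mathbf v)\,d\mathbf v$ with $\Omega\subset\mathbb{R}^d$, $\varphi:\Omega\times\mathcal Z\times\Theta\to\mathbb{R}$ and weight function $\omega:\Omega\to\mathbb{R}_+$, and let $\mathbf z_1,\dots,\mathbf z_n$ be i.i.d. from $f(\cdot;\boldsymbol\theta_0)$. For $r\in\mathbb N$ let $\tilde f_r(\mathbf z;\boldsymbol\theta)=\sum_{j=1}^r w_{j,r}\varphi(\mathbf v_{j,r},\mathbf z,\boldsymbol\theta)$ with (possibly random) nodes $\mathbf v_{j,r}\in\Omega$ and weights $w_{j,r}$ not depending on $\mathbf z$. Let $R:\mathbb N\to\mathbb N$, $\tilde L_n(\boldsymbol\theta)=\frac1n\sum_{i=1}^n\log\tilde f_{R(n)}(\mathbf z_i;\boldsymbol\theta)$ and $\hat{\boldsymbol\theta}_{MAL}=\arg\max_{\boldsymbol\theta\in\Theta}\tilde L_n(\boldsymbol\theta)$. Let $\bar{\mathcal E}_0(r)=\sup_{\mathbf z\in\mathcal Z,\boldsymbol\theta\in\Theta}|f(\mathbf z;\boldsymbol\theta)-\tilde f_r(\mathbf z;\boldsymbol\theta)|$. Assume: there is a continuous function $Q_0:\Theta\to\mathbb{R}$ uniquely maximized at $\boldsymbol\theta_0\in\Theta$,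 $\Theta$ is compact, and $L_n(\boldsymbol\theta)=\frac1n\sum_{i=1}^n\log f(\mathbf z_i;\boldsymbol\theta)$ converges uniformly in probability to $Q_0$ on $\Theta$; and (i) there is $\bar\delta>0$ with $f(\mathbf z;\boldsymbol\theta)>\bar\delta$ for all $\mathbf z\in\mathcal Z,\boldsymbol\theta\in\Theta$; (ii) $\varphi(\mathbf v,\mathbf z,\boldsymbol\theta)$ is continuous in $\boldsymbol\theta\in\Theta$; (iii) $\operatorname{plim}_{r\to\infty}\bar{\mathcal E}_0(r)=0$; (iv) $R(n)$ is monotonically increasing in $n$ and $\lim_{n\to\infty}R(n)=\infty$. Then $\hat{\boldsymbol\theta}_{MAL}\to\boldsymbol\theta_0$ in probability. *)

theory Defs
  imports "HOL-Probability.Probability"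
begin

text \<open>Outer probability (handles possibly non-measurable events such as those
involving an argmax or a supremum over the parameter set).\<close>
definition outer_prob :: "'a measure \<Rightarrow> 'a set \<Rightarrow> real" where
  "outer_prob M A = Inf {measure M B | B. B \<in> sets M \<and> A \<inter> space M \<subseteq> B}"

definition conv_in_prob :: "'a measure \<Rightarrow> (nat \<Rightarrow> 'a \<Rightarrow> 'b::metric_space) \<Rightarrow> 'b \<Rightarrow> bool" where
  "conv_in_prob M X c \<longleftrightarrow>
     (\<forall>e>0. ((\<lambda>n. outer_prob M {\<omega> \<in> space M. dist (X n \<omega>) c > e}) \<longlongrightarrow> 0) sequentially)"

definition fint :: "('d::euclidean_space) set \<Rightarrow> ('d \<Rightarrow> 'z \<Rightarrow> 't \<Rightarrow> real) \<Rightarrow> ('d \<Rightarrow> real)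
    \<Rightarrow> 'z \<Rightarrow> 't \<Rightarrow> real" where
  "fint \<Omega> \<phi> w z \<theta> = (LINT v : \<Omega> | lborel. \<phi> v z \<theta> * w v)"

definition ftilde :: "('d \<Rightarrow> 'z \<Rightarrow> 't \<Rightarrow> real) \<Rightarrow> (nat \<Rightarrow> nat \<Rightarrow> 'a \<Rightarrow> 'd)
    \<Rightarrow> (nat \<Rightarrow> nat \<Rightarrow> 'a \<Rightarrow> real) \<Rightarrow> nat \<Rightarrow> 'a \<Rightarrow> 'z \<Rightarrow> 't \<Rightarrow> real" where
  "ftilde \<phi> V W r \<omega> z \<theta> = (\<Sum>j = 1..r. W j r \<omega> * \<phi> (V j r \<omega>) z \<theta>)"

definition avg_loglik :: "('z \<Rightarrow> 't \<Rightarrow> real) \<Rightarrow> (nat \<Rightarrow> 'a \<Rightarrow> 'z) \<Rightarrow> nat \<Rightarrow> 'a \<Rightarrow> 't \<Rightarrow> real" where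
  "avg_loglik g z n \<omega> \<theta> = (1 / real n) * (\<Sum>i = 1..n. ln (g (z i \<omega>) \<theta>))"

definition E0bar :: "'z set \<Rightarrow> 't set \<Rightarrow> ('z \<Rightarrow> 't \<Rightarrow> real) \<Rightarrow> ('a \<Rightarrow> 'z \<Rightarrow> 't \<Rightarrow> real) \<Rightarrow> 'a \<Rightarrow> ereal" where
  "E0bar Z \<Theta> f g \<omega> = (SUP zt \<in> Z \<times> \<Theta>. ereal \<bar>f (fst zt) (snd zt) - g \<omega> (fst zt) (snd zt)\<bar>)"

end

theory Submission
  imports Defs
begin

lemma op_nonempty: "{measure M B | B. B \<in> sets M \<and> A \<inter> space M \<subseteq> B} \<noteq> {}"
  by blast

lemma op_bdd: "bdd_below {measure M B | B. B \<in> sets M \<and> A \<inter> space M \<subseteq> B}"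
  by (rule bdd_belowI[where m=0]) auto

lemma outer_prob_nonneg: "0 \<le> outer_prob M A"
  unfolding outer_prob_def by (rule cInf_greatest[OF op_nonempty]) auto

lemma outer_prob_mono: "A \<subseteq> B \<Longrightarrow> outer_prob M A \<le> outer_prob M B"
  unfolding outer_prob_def
  by (rule cInf_superset_mono[OF op_nonempty op_bdd]) blast

lemma outer_prob_union:
  assumes "finite_measure M"
  shows "outer_prob M (A \<union> B) \<le> outer_prob M A + outer_prob M B"
proof -
  have "outer_prob M (A \<union> B) - outer_prob M B \<le> outer_prob M A"
    unfolding outer_prob_def[of M A]
  proof (rule cInf_greatest[OF op_nonempty])
    fix x assume "x \<in> {measure M B | B. B \<in> sets M \<and> A \<inter> space M \<subseteq> B}"
    then obtain B1 where B1: "B1 \<in> sets M" "A \<inter> space M \<subseteq> B1" "x = measure M B1" by blast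
    have "outer_prob M (A \<union> B) - x \<le> outer_prob M B"
      unfolding outer_prob_def[of M B]
    proof (rule cInf_greatest[OF op_nonempty])
      fix y assume "y \<in> {measure M B' | B'. B' \<in> sets M \<and> B \<inter> space M \<subseteq> B'}"
      then obtain B2 where B2: "B2 \<in> sets M" "B \<inter> space M \<subseteq> B2" "y = measure M B2" by blast
      have "outer_prob M (A \<union> B) \<le> measure M (B1 \<union> B2)"
        unfolding outer_prob_def
        by (rule cInf_lower[OF _ op_bdd]) (use B1 B2 in blast)
      also have "\<dots> \<le> measure M B1 + measure M B2"
        using B1 B2 assms by (intro measure_subadditive) (auto simp: finite_measure.emeasure_finite)
      finally show "outer_prob M (A \<union> B) - x \<le> y" using B1 B2 by simp
    qed
    then show "outer_prob M (A \<union> B) - outer_prob M B \<le> x" by simp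
  qed
  then show ?thesis by simp
qed

lemma ln_diff_bound:
  fixes a b d e :: real
  assumes "a \<ge> d / 2" "b \<ge> d / 2" "d > 0" "\<bar>a - b\<bar> \<le> e"
  shows "\<bar>ln a - ln b\<bar> \<le> 2 * e / d"
proof -
  have a: "a > 0" and b: "b > 0" using assms by auto
  have h: "ln x - ln y \<le> 2 * e / d" if "x \<ge> d/2" "y \<ge> d/2" "\<bar>x - y\<bar> \<le> e" for x y :: real
  proof -
    have x: "x > 0" and y: "y > 0" using that assms by auto
    have "ln x - ln y = ln (x / y)" using x y by (simp add: ln_div)
    also have "\<dots> \<le> x / y - 1" using x y by (intro ln_le_minus_one) simp
    also have "\<dots> = (x - y) / y" using y by (simp add: field_simps)
    also have "\<dots> \<le> e / y" using y that by (intro divide_right_mono) auto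
    also have "\<dots> \<le> e / (d/2)"
      using that y assms by (intro divide_left_mono) (auto intro: order_trans[OF abs_ge_zero])
    also have "\<dots> = 2 * e / d" by simp
    finally show ?thesis .
  qed
  have ba: "\<bar>b - a\<bar> \<le> e" using assms(4) by (simp only: abs_minus_commute)
  have 1: "ln a - ln b \<le> 2 * e / d" by (rule h) (use assms in auto)
  have 2: "ln b - ln a \<le> 2 * e / d" by (rule h) (use assms ba in auto)
  show ?thesis unfolding abs_le_iff using 1 2 by linarith
qed

lemma avg_diff_bound:
  assumes "\<forall>i\<in>{1..n}. \<bar>ln (g1 (z i \<omega>) \<theta>) - ln (g2 (z i \<omega>) \<theta>)\<bar> \<le> c" "c \<ge> 0"
  shows "\<bar>avg_loglik g1 z n \<omega> \<theta> - avg_loglik g2 z n \<omega> \<theta>\<bar> \<le> c"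
proof (cases "n = 0")
  case True then show ?thesis using assms by (simp add: avg_loglik_def)
next
  case False
  have "\<bar>avg_loglik g1 z n \<omega> \<theta> - avg_loglik g2 z n \<omega> \<theta>\<bar>
      = (1 / real n) * \<bar>\<Sum>i = 1..n. (ln (g1 (z i \<omega>) \<theta>) - ln (g2 (z i \<omega>) \<theta>))\<bar>"
  proof -
    have "avg_loglik g1 z n \<omega> \<theta> - avg_loglik g2 z n \<omega> \<theta>
      = (1 / real n) * (\<Sum>i = 1..n. (ln (g1 (z i \<omega>) \<theta>) - ln (g2 (z i \<omega>) \<theta>)))"
      by (simp only: avg_loglik_def sum_subtractf right_diff_distrib)
    then have "\<bar>avg_loglik g1 z n \<omega> \<theta> - avg_loglik g2 z n \<omega> \<theta>\<bar>
      = \<bar>1 / real n\<bar> * \<bar>\<Sum>i = 1..n. (ln (g1 (z i \<omega>) \<theta>) - ln (g2 (z i \<omega>) \<theta>))\<bar>"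
      by (simp only: abs_mult)
    moreover have "\<bar>1 / real n\<bar> = 1 / real n" by simp
    ultimately show ?thesis by (simp only:)
  qed
  also have "\<dots> \<le> (1 / real n) * (\<Sum>i = 1..n. c)"
  proof (rule mult_left_mono)
    show "\<bar>\<Sum>i = 1..n. (ln (g1 (z i \<omega>) \<theta>) - ln (g2 (z i \<omega>) \<theta>))\<bar> \<le> (\<Sum>i = 1..n. c)"
      by (rule order_trans[OF sum_abs sum_mono]) (use assms in blast)
  qed simp
  also have "\<dots> = c" using False by simp
  finally show ?thesis .
qed


theorem corollary10:
  fixes M :: "'a measure"
    and \<mu> :: "(real ^ 'q) measure"
    and Z :: "(real ^ 'q) set"
    and \<Theta> :: "(real ^ 'p) set"
    and \<Omega> :: "(real ^ 'd) set"
    and \<phi> :: "real ^ 'd \<Rightarrow> real ^ 'q \<Rightarrow> real ^ 'p \<Rightarrow> real"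
    and w :: "real ^ 'd \<Rightarrow> real"
    and z :: "nat \<Rightarrow> 'a \<Rightarrow> real ^ 'q"
    and V :: "nat \<Rightarrow> nat \<Rightarrow> 'a \<Rightarrow> real ^ 'd"
    and W :: "nat \<Rightarrow> nat \<Rightarrow> 'a \<Rightarrow> real"
    and R :: "nat \<Rightarrow> nat"
    and Q0 :: "real ^ 'p \<Rightarrow> real"
    and \<theta>0 :: "real ^ 'p"
    and \<theta>MAL :: "nat \<Rightarrow> 'a \<Rightarrow> real ^ 'p"
    and \<delta> :: real
  assumes M: "prob_space M"
    and Z_meas: "Z \<in> sets borel"
    and w_nonneg: "\<forall>v\<in>\<Omega>. w v \<ge> 0"
    \<comment> \<open>the family consists of probability mass/density functions w.r.t. base measure mu\<close>
    and f_nonneg: "\<forall>\<theta>\<in>\<Theta>. \<forall>x\<in>Z. fint \<Omega> \<phi> w x \<theta> \<ge> 0"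
    and f_total: "\<forall>\<theta>\<in>\<Theta>. (\<integral>\<^sup>+ x. indicator Z x * ennreal (fint \<Omega> \<phi> w x \<theta>) \<partial>\<mu>) = 1"
    \<comment> \<open>z_1, z_2, ... i.i.d. with density f(.;theta0), values in Z\<close>
    and z_meas: "\<forall>i. z i \<in> borel_measurable M"
    and z_in_Z: "\<forall>i. \<forall>\<omega>\<in>space M. z i \<omega> \<in> Z"
    and z_distr: "\<forall>i. distr M borel (z i) = density \<mu> (\<lambda>x. indicator Z x * ennreal (fint \<Omega> \<phi> w x \<theta>0))"
    and z_indep: "prob_space.indep_vars M (\<lambda>_. borel) z UNIV"
    \<comment> \<open>nodes in Omega\<close>
    and V_in: "\<forall>r j \<omega>. 1 \<le> j \<longrightarrow> j \<le> r \<longrightarrow> \<omega> \<in> space M \<longrightarrow> V j r \<omega> \<in> \<Omega>"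
    \<comment> \<open>the MAL estimator is a maximiser of the approximate log-likelihood over Theta\<close>
    and MAL_in: "\<forall>n. \<forall>\<omega>\<in>space M. \<theta>MAL n \<omega> \<in> \<Theta>"
    and MAL_max: "\<forall>n. \<forall>\<omega>\<in>space M. \<forall>\<theta>\<in>\<Theta>.
        avg_loglik (ftilde \<phi> V W (R n) \<omega>) z n \<omega> \<theta>
          \<le> avg_loglik (ftilde \<phi> V W (R n) \<omega>) z n \<omega> (\<theta>MAL n \<omega>)"
    \<comment> \<open>identification and uniform convergence\<close>
    and Theta_compact: "compact \<Theta>"
    and theta0_in: "\<theta>0 \<in> \<Theta>"
    and Q0_cont: "continuous_on \<Theta> Q0"
    and Q0_max: "\<forall>\<theta>\<in>\<Theta>. \<theta> \<noteq> \<theta>0 \<longrightarrow> Q0 \<theta> < Q0 \<theta>0"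
    and unif_conv: "\<forall>e>0. ((\<lambda>n. outer_prob M {\<omega> \<in> space M.
        (SUP \<theta>\<in>\<Theta>. ereal \<bar>avg_loglik (fint \<Omega> \<phi> w) z n \<omega> \<theta> - Q0 \<theta>\<bar>) > ereal e}) \<longlongrightarrow> 0) sequentially"
    \<comment> \<open>(i)\<close>
    and delta_pos: "\<delta> > 0"
    and f_lower: "\<forall>x\<in>Z. \<forall>\<theta>\<in>\<Theta>. fint \<Omega> \<phi> w x \<theta> > \<delta>"
    \<comment> \<open>(ii)\<close>
    and phi_cont: "\<forall>v\<in>\<Omega>. \<forall>x\<in>Z. continuous_on \<Theta> (\<phi> v x)"
    \<comment> \<open>(iii)\<close>
    and E0_plim: "\<forall>e>0. ((\<lambda>r. outer_prob M {\<omega> \<in> space M.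
        E0bar Z \<Theta> (fint \<Omega> \<phi> w) (ftilde \<phi> V W r) \<omega> > ereal e}) \<longlongrightarrow> 0) sequentially"
    \<comment> \<open>(iv)\<close>
    and R_mono: "mono R"
    and R_lim: "filterlim R at_top sequentially"
  shows "conv_in_prob M \<theta>MAL \<theta>0"
proof -
  let ?f = "fint \<Omega> \<phi> w"
  interpret P: prob_space M by (rule M)
  have fm: "finite_measure M" by (rule P.finite_measure_axioms)
  show ?thesis unfolding conv_in_prob_def
  proof (intro allI impI)
    fix \<epsilon> :: real assume \<epsilon>: "\<epsilon> > 0"
    obtain \<gamma> where \<gamma>: "\<gamma> > 0" and gap: "\<forall>\<theta>\<in>\<Theta>. dist \<theta> \<theta>0 \<ge> \<epsilon> \<longrightarrow> Q0 \<theta> \<le> Q0 \<theta>0 - \<gamma>"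
    proof (cases "\<Theta> \<inter> {\<theta>. dist \<theta> \<theta>0 \<ge> \<epsilon>} = {}")
      case True then show ?thesis using that[of 1] by auto
    next
      case False
      let ?K = "\<Theta> \<inter> {\<theta>. dist \<theta> \<theta>0 \<ge> \<epsilon>}"
      have "closed {\<theta>. dist \<theta> \<theta>0 \<ge> \<epsilon>}"
        by (intro closed_Collect_le continuous_intros)
      then have "compact ?K" by (rule compact_Int_closed[OF Theta_compact])
      moreover have "continuous_on ?K Q0" using Q0_cont by (rule continuous_on_subset) auto
      ultimately obtain \<theta>1 where t1: "\<theta>1 \<in> ?K" "\<forall>y\<in>?K. Q0 y \<le> Q0 \<theta>1"
        using continuous_attains_sup[OF _ False] by blast
      have "\<theta>1 \<noteq> \<theta>0" using t1 \<epsilon> by auto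
      then have "Q0 \<theta>1 < Q0 \<theta>0" using Q0_max t1 by auto
      then show ?thesis using that[of "Q0 \<theta>0 - Q0 \<theta>1"] t1 by auto
    qed
    define \<eta> where "\<eta> = min (\<delta> / 4) (\<gamma> * \<delta> / 16)"
    have \<eta>: "\<eta> > 0" "\<eta> \<le> \<delta> / 4" "2 * \<eta> / \<delta> \<le> \<gamma> / 8"
      using delta_pos \<gamma> by (auto simp: \<eta>_def field_simps min_def)
    define A where "A n = {\<omega> \<in> space M. dist (\<theta>MAL n \<omega>) \<theta>0 > \<epsilon>}" for n
    define B where "B n = {\<omega> \<in> space M.
        (SUP \<theta>\<in>\<Theta>. ereal \<bar>avg_loglik ?f z n \<omega> \<theta> - Q0 \<theta>\<bar>) > ereal (\<gamma>/4)}" for n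
    define C where "C r = {\<omega> \<in> space M.
        E0bar Z \<Theta> ?f (ftilde \<phi> V W r) \<omega> > ereal \<eta>}" for r
    have sub: "A n \<subseteq> B n \<union> C (R n)" for n
    proof
      fix \<omega> assume "\<omega> \<in> A n"
      then have \<omega>: "\<omega> \<in> space M" and far: "dist (\<theta>MAL n \<omega>) \<theta>0 > \<epsilon>" by (auto simp: A_def)
      show "\<omega> \<in> B n \<union> C (R n)"
      proof (rule ccontr)
        assume "\<omega> \<notin> B n \<union> C (R n)"
        then have nB: "(SUP \<theta>\<in>\<Theta>. ereal \<bar>avg_loglik ?f z n \<omega> \<theta> - Q0 \<theta>\<bar>) \<le> ereal (\<gamma>/4)"
          and nC: "E0bar Z \<Theta> ?f (ftilde \<phi> V W (R n)) \<omega> \<le> ereal \<eta>"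
          using \<omega> by (auto simp: B_def C_def not_less)
        have LQ: "\<bar>avg_loglik ?f z n \<omega> \<theta> - Q0 \<theta>\<bar> \<le> \<gamma>/4" if "\<theta> \<in> \<Theta>" for \<theta>
          using nB that by (simp add: SUP_le_iff)
        have E: "\<bar>?f x \<theta> - ftilde \<phi> V W (R n) \<omega> x \<theta>\<bar> \<le> \<eta>" if "x \<in> Z" "\<theta> \<in> \<Theta>" for x \<theta>
        proof -
          have "(x, \<theta>) \<in> Z \<times> \<Theta>" using that by auto
          then show ?thesis using nC unfolding E0bar_def by (force simp: SUP_le_iff)
        qed
        have LL: "\<bar>avg_loglik (ftilde \<phi> V W (R n) \<omega>) z n \<omega> \<theta> - avg_loglik ?f z n \<omega> \<theta>\<bar> \<le> \<gamma>/8"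
          if \<theta>: "\<theta> \<in> \<Theta>" for \<theta>
        proof -
          have "\<bar>avg_loglik (ftilde \<phi> V W (R n) \<omega>) z n \<omega> \<theta> - avg_loglik ?f z n \<omega> \<theta>\<bar> \<le> 2 * \<eta> / \<delta>"
          proof (rule avg_diff_bound)
            show "0 \<le> 2 * \<eta> / \<delta>" using \<eta> delta_pos by simp
            show "\<forall>i\<in>{1..n}. \<bar>ln (ftilde \<phi> V W (R n) \<omega> (z i \<omega>) \<theta>) - ln (?f (z i \<omega>) \<theta>)\<bar> \<le> 2 * \<eta> / \<delta>"
            proof
              fix i
              have zi: "z i \<omega> \<in> Z" using z_in_Z \<omega> by auto
              have e1: "\<bar>?f (z i \<omega>) \<theta> - ftilde \<phi> V W (R n) \<omega> (z i \<omega>) \<theta>\<bar> \<le> \<eta>" using E zi \<theta> by blast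
              have f1: "?f (z i \<omega>) \<theta> > \<delta>" using f_lower zi \<theta> by blast
              show "\<bar>ln (ftilde \<phi> V W (R n) \<omega> (z i \<omega>) \<theta>) - ln (?f (z i \<omega>) \<theta>)\<bar> \<le> 2 * \<eta> / \<delta>"
                by (rule ln_diff_bound) (use e1 f1 \<eta> delta_pos in \<open>auto simp: abs_le_iff\<close>)
            qed
          qed
          then show ?thesis using \<eta> by linarith
        qed
        let ?t = "\<theta>MAL n \<omega>"
        have tin: "?t \<in> \<Theta>" using MAL_in \<omega> by blast
        have "avg_loglik (ftilde \<phi> V W (R n) \<omega>) z n \<omega> \<theta>0 \<le> avg_loglik (ftilde \<phi> V W (R n) \<omega>) z n \<omega> ?t"
          using MAL_max \<omega> theta0_in by blast
        then have "Q0 ?t \<ge> Q0 \<theta>0 - 3 * \<gamma> / 4"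
          using LL[OF tin] LL[OF theta0_in] LQ[OF tin] LQ[OF theta0_in] unfolding abs_le_iff by linarith
        moreover have "Q0 ?t \<le> Q0 \<theta>0 - \<gamma>" using gap tin far by auto
        ultimately show False using \<gamma> by linarith
      qed
    qed
    have lim1: "(\<lambda>n. outer_prob M (B n)) \<longlonglongrightarrow> 0"
      using unif_conv \<gamma> unfolding B_def by auto
    have lim2': "(\<lambda>r. outer_prob M (C r)) \<longlonglongrightarrow> 0"
      using E0_plim \<eta> unfolding C_def by auto
    have lim2: "(\<lambda>n. outer_prob M (C (R n))) \<longlonglongrightarrow> 0"
      by (rule filterlim_compose[OF lim2' R_lim])
    have "(\<lambda>n. outer_prob M (A n)) \<longlonglongrightarrow> 0"
    proof (rule tendsto_sandwich[where f="\<lambda>_. 0" and h="\<lambda>n. outer_prob M (B n) + outer_prob M (C (R n))"])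
      show "\<forall>\<^sub>F n in sequentially. 0 \<le> outer_prob M (A n)" by (simp add: outer_prob_nonneg)
      show "\<forall>\<^sub>F n in sequentially. outer_prob M (A n) \<le> outer_prob M (B n) + outer_prob M (C (R n))"
        using order_trans[OF outer_prob_mono[OF sub] outer_prob_union[OF fm]] by simp
      show "(\<lambda>_. 0::real) \<longlonglongrightarrow> 0" by simp
      show "(\<lambda>n. outer_prob M (B n) + outer_prob M (C (R n))) \<longlonglongrightarrow> 0"
        using tendsto_add[OF lim1 lim2] by simp
    qed
    then show "(\<lambda>n. outer_prob M {\<omega> \<in> space M. dist (\<theta>MAL n \<omega>) \<theta>0 > \<epsilon>}) \<longlonglongrightarrow> 0"
      by (simp add: A_def)
  qed
qed

end
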